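(* Let $X$ and $F$ be Banach spaces, $N\in\mathbb{N}$, $\lambda\ge1$, and suppose $I\colon X\to\ell_\infty^N$ is a $\lambda$-embedding. Then every bounded operator $T\colon X\to F$ satisfies \[ \pi_2(T)\le e^2\,\lambda\,C_2(F)\,\sqrt{1+\log N}\,\|T\|. \]
   Context: An operator $I\colon X\to Y$ is a $\lambda$-embedding if it is injective with closed range and $\|I\|\,\|I^{-1}\colon I(X)\to X\|\le\lambda$. $\ell_\infty^N$ is $\mathbb{C}^N$ with the max norm. $C_2(F)$ is the cotype-2 constant of $F$: the least $C$ with $(\sum_k\|x_k\|^2)^{1/2}\le C(\int_0^1\|\sum_k r_k(t)x_k\|^2dt)^{1/2}$ for all finite families in $F$, where $r_k$ are the Rademacher functions ($C_2(F)=\infty$ if no such constant exists). $\pi_2$ denotes the absolutely 2-summing norm. $\log$ is the natural logarithm. *)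

theory Defs
  imports "HOL-Analysis.Analysis"
begin

text \<open>Complex Banach spaces: a real Banach space with a compatible complex scalar
  multiplication (HOL-Analysis has no complex vector space class).\<close>
class cbanach = banach +
  fixes cscale :: "complex \<Rightarrow> 'a \<Rightarrow> 'a"
  assumes cscale_of_real: "cscale (complex_of_real r) x = r *\<^sub>R x"
    and cscale_add_right: "cscale a (x + y) = cscale a x + cscale a y"
    and cscale_add_left: "cscale (a + b) x = cscale a x + cscale b x"
    and cscale_cscale: "cscale a (cscale b x) = cscale (a * b) x"
    and norm_cscale: "norm (cscale a x) = cmod a * norm x"

definition bounded_clin_op :: "('a::cbanach \<Rightarrow> 'b::cbanach) \<Rightarrow> bool" where
  "bounded_clin_op T \<longleftrightarrow>
     (\<forall>x y. T (x + y) = T x + T y) \<and> (\<forall>c x. T (cscale c x) = cscale c (T x)) \<and>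
     (\<exists>K. \<forall>x. norm (T x) \<le> K * norm x)"

definition bounded_clin_fun :: "('a::cbanach \<Rightarrow> complex) \<Rightarrow> bool" where
  "bounded_clin_fun \<phi> \<longleftrightarrow>
     (\<forall>x y. \<phi> (x + y) = \<phi> x + \<phi> y) \<and> (\<forall>c x. \<phi> (cscale c x) = c * \<phi> x) \<and>
     (\<exists>K. \<forall>x. cmod (\<phi> x) \<le> K * norm x)"

definition dual_ball :: "('a::cbanach \<Rightarrow> complex) set" where
  "dual_ball = {\<phi>. bounded_clin_fun \<phi> \<and> onorm \<phi> \<le> 1}"

definition weak_l2 :: "nat \<Rightarrow> (nat \<Rightarrow> 'a::cbanach) \<Rightarrow> real" where
  "weak_l2 n x = (SUP \<phi>\<in>dual_ball. sqrt (\<Sum>k<n. (cmod (\<phi> (x k)))\<^sup>2))"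

text \<open>Absolutely 2-summing norm (infinity if T is not 2-summing).\<close>
definition pi2 :: "('a::cbanach \<Rightarrow> 'b::cbanach) \<Rightarrow> ereal" where
  "pi2 T = Inf {C. 0 \<le> C \<and> (\<forall>n (x::nat \<Rightarrow> 'a).
       ereal (sqrt (\<Sum>k<n. (norm (T (x k)))\<^sup>2)) \<le> C * ereal (weak_l2 n x))}"

text \<open>Rademacher functions r_k(t) = sign(sin(2^k pi t)), k \<ge> 1 (equal a.e. on [0,1]).\<close>
definition rademacher :: "nat \<Rightarrow> real \<Rightarrow> real" where
  "rademacher k t = (if even \<lfloor>2 ^ k * t\<rfloor> then 1 else -1)"

text \<open>Cotype-2 constant of the space 'b (infinity if there is no such constant).\<close>
definition cotype2_const :: "'b::cbanach itself \<Rightarrow> ereal" where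
  "cotype2_const _ = Inf {C. 0 \<le> C \<and> (\<forall>n (x::nat \<Rightarrow> 'b).
       ereal (sqrt (\<Sum>k<n. (norm (x k))\<^sup>2)) \<le>
       C * ereal (sqrt (integral {0..1} (\<lambda>t. (norm (\<Sum>k<n. rademacher (Suc k) t *\<^sub>R x k))\<^sup>2))))}"

text \<open>Max norm of l_infinity^N; vectors are functions nat \<Rightarrow> complex supported on {..<N}.\<close>
definition linf_norm :: "nat \<Rightarrow> (nat \<Rightarrow> complex) \<Rightarrow> real" where
  "linf_norm N v = Max (insert 0 ((\<lambda>i. cmod (v i)) ` {..<N}))"

text \<open>lambda-embedding of X into l_infinity^N: injective bounded complex-linear map
  with \<parallel>I\<parallel> * \<parallel>I^{-1}\<parallel> \<le> lambda (range closedness is automatic in finite dimension,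
  the boundedness of the inverse is required explicitly).\<close>
definition lambda_embedding :: "nat \<Rightarrow> real \<Rightarrow> ('a::cbanach \<Rightarrow> nat \<Rightarrow> complex) \<Rightarrow> bool" where
  "lambda_embedding N lam I \<longleftrightarrow>
     (\<forall>x y. I (x + y) = (\<lambda>i. I x i + I y i)) \<and> (\<forall>c x. I (cscale c x) = (\<lambda>i. c * I x i)) \<and>
     (\<forall>x i. N \<le> i \<longrightarrow> I x i = 0) \<and> inj I \<and>
     bdd_above (range (\<lambda>x. linf_norm N (I x) / norm x)) \<and>
     bdd_above (range (\<lambda>x. norm x / linf_norm N (I x))) \<and>
     (SUP x. linf_norm N (I x) / norm x) * (SUP x. norm x / linf_norm N (I x)) \<le> lam"

end

theory Submission
  imports Defs
begin


definition eps :: "nat \<Rightarrow> nat \<Rightarrow> nat \<Rightarrow> real" where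
  "eps n j k = (if even (j div 2^(n-k)) then 1 else -1)"

definition avg :: "nat \<Rightarrow> (nat \<Rightarrow> real) \<Rightarrow> real" where
  "avg n h = (\<Sum>j<2^n. h j) / 2^n"

lemma sum_double_split: "(\<Sum>j<2*(m::nat). (h::nat\<Rightarrow>real) j) = (\<Sum>j<m. h (2*j) + h (2*j+1))"
  by (induction m) (auto simp: ac_simps)

lemma eps_Suc: assumes "k \<le> n" "b < 2" shows "eps (Suc n) (2*j+b) k = eps n j k"
proof -
  have "Suc n - k = Suc (n-k)" using assms by auto
  then have "(2*j+b) div 2^(Suc n - k) = ((2*j+b) div 2) div 2^(n-k)"
    by (simp add: div_mult2_eq)
  also have "(2*j+b) div 2 = j" using assms by auto
  finally show ?thesis unfolding eps_def by simp
qed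

lemma eps_last: assumes "b < 2" shows "eps (Suc n) (2*j+b) (Suc n) = (if b = 0 then 1 else -1)"
  using assms unfolding eps_def by (auto simp: less_2_cases_iff)

lemma avg_exp: fixes c :: "nat \<Rightarrow> real" shows
  "avg n (\<lambda>j. exp (\<Sum>k<n. eps n j (Suc k) * c k)) = (\<Prod>k<n. cosh (c k))"
proof (induction n)
  case 0
  then show ?case by (simp add: avg_def)
next
  case (Suc n)
  have key: "(\<Sum>k<Suc n. eps (Suc n) (2*j+b) (Suc k) * c k) =
     (\<Sum>k<n. eps n j (Suc k) * c k) + (if b = 0 then 1 else -1) * c n" if "b < 2" for j b
    using that by (simp add: eps_Suc eps_last)
  have "(\<Sum>j<2^Suc n. exp (\<Sum>k<Suc n. eps (Suc n) j (Suc k) * c k)) =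
     (\<Sum>j<2^n. exp (\<Sum>k<Suc n. eps (Suc n) (2*j+0) (Suc k) * c k) +
               exp (\<Sum>k<Suc n. eps (Suc n) (2*j+1) (Suc k) * c k))"
    using sum_double_split[where m="2^n"] by simp
  also have "\<dots> = (\<Sum>j<2^n. 2 * cosh (c n) * exp (\<Sum>k<n. eps n j (Suc k) * c k))"
    by (intro sum.cong refl, simp only: key[of 0] key[of 1], simp add: cosh_def exp_add exp_diff algebra_simps
        exp_minus field_simps)
  also have "\<dots> = 2 * cosh (c n) * (\<Sum>j<2^n. exp (\<Sum>k<n. eps n j (Suc k) * c k))"
    by (simp add: sum_distrib_left)
  finally show ?case using Suc unfolding avg_def by (simp add: field_simps)
qed

lemma cosh_le_exp_sq: "cosh (x::real) \<le> exp (x^2)"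
proof -
  have main: "cosh x \<le> exp (x^2)" if "0 \<le> x" for x :: real
  proof (cases "x \<le> 1")
    case True
    have a: "exp x \<le> 1 + x + x^2" using exp_bound that True by auto
    have "1 + x \<le> exp x" by (rule exp_ge_add_one_self)
    then have "exp (-x) \<le> 1 / (1+x)" using that by (simp add: exp_minus field_simps)
    also have "\<dots> \<le> 1 - x + x^2"
    proof -
      have "1 \<le> (1+x) * (1 - x + x^2)" using that by (simp add: algebra_simps power2_eq_square power3_eq_cube[symmetric])
      then show ?thesis using that by (simp add: field_simps)
    qed
    finally have "cosh x \<le> 1 + x^2" using a by (simp add: cosh_def)
    also have "\<dots> \<le> exp (x^2)" by (rule exp_ge_add_one_self[of "x^2", simplified add.commute])
    finally show ?thesis .
  next
    case False
    have "exp (-x) \<le> exp x" using that by simp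
    then have "cosh x \<le> exp x" by (simp add: cosh_def)
    also have "\<dots> \<le> exp (x^2)" using False by (simp add: power2_eq_square)
    finally show ?thesis .
  qed
  show ?thesis
  proof (cases "0 \<le> x")
    case True then show ?thesis using main by auto
  next
    case False then show ?thesis using main[of "-x"] by simp
  qed
qed



lemma dyadic_integral:
  fixes f :: "real \<Rightarrow> real"
  assumes "\<And>j t. j < 2^n \<Longrightarrow> real j / 2^n \<le> t \<Longrightarrow> t < (real j + 1) / 2^n \<Longrightarrow> f t = h j"
  shows "(f has_integral avg n h) {0..1}"
proof -
  have "m \<le> 2^n \<Longrightarrow> (f has_integral (\<Sum>j<m. h j) / 2^n) {0..real m / 2^n}" for m
  proof (induction m)
    case 0
    then show ?case using has_integral_refl(2)[of f 0] by simp
  next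
    case (Suc m)
    have piece: "(f has_integral h m / 2^n) {real m / 2^n .. real (Suc m) / 2^n}"
    proof (rule has_integral_spike_finite[of "{real (Suc m) / 2^n}"])
      show "((\<lambda>x. h m) has_integral h m / 2^n) {real m / 2^n .. real (Suc m) / 2^n}"
        using has_integral_const_real[of "h m" "real m / 2^n" "real (Suc m) / 2^n"]
        by (simp add: field_simps)
      fix x assume "x \<in> {real m / 2 ^ n..real (Suc m) / 2 ^ n} - {real (Suc m) / 2 ^ n}"
      then show "f x = h m" using assms[of m x] Suc.prems by (auto simp: add.commute)
    qed simp
    have "(f has_integral ((\<Sum>j<m. h j) / 2^n + h m / 2^n)) {0..real (Suc m) / 2^n}"
      by (rule has_integral_combine[OF _ _ Suc.IH[OF Suc_leD[OF Suc.prems]] piece]) (auto simp: field_simps)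
    then show ?case by (simp add: add_divide_distrib)
  qed
  from this[of "2^n"] show ?thesis by (simp add: avg_def)
qed

lemma rademacher_dyadic:
  assumes "j < 2^n" "real j / 2^n \<le> t" "t < (real j + 1) / 2^n" "k \<le> n"
  shows "rademacher k t = eps n j k"
proof -
  define q where "q = j div 2^(n-k)"
  have p: "(2::real)^n = 2^k * 2^(n-k)" using assms(4) by (simp add: power_add[symmetric])
  have q1: "q * 2^(n-k) \<le> j" unfolding q_def by (simp add: div_times_less_eq_dividend)
  have q2: "j < (q+1) * 2^(n-k)" unfolding q_def
    using dividend_less_div_times[of "2^(n-k)" j] by (simp add: algebra_simps)
  have q2': "j + 1 \<le> (q+1) * 2^(n-k)" using q2 by simp
  have t1: "real j \<le> 2^n * t" using assms(2) by (simp add: field_simps)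
  have t2: "2^n * t < real j + 1" using assms(3) by (simp add: field_simps)
  have "real (q * 2^(n-k)) \<le> real j" using q1 by (simp only: of_nat_le_iff)
  then have "real q * 2^(n-k) \<le> real j" by simp
  moreover have pp: "(2::real)^n * t = (2^k * t) * 2^(n-k)" using p by (simp add: mult_ac)
  ultimately have "real q * 2^(n-k) \<le> (2^k * t) * 2^(n-k)" using t1 by linarith
  then have l: "real q \<le> 2^k * t" by (rule mult_right_le_imp_le) simp
  have "real (j + 1) \<le> real ((q + 1) * 2^(n-k))" using q2' by (simp only: of_nat_le_iff)
  then have "real j + 1 \<le> (real q + 1) * 2^(n-k)" by (simp add: algebra_simps)
  then have "(2^k * t) * 2^(n-k) < (real q + 1) * 2^(n-k)" using t2 pp by linarith
  then have u: "2^k * t < real q + 1" by (rule mult_right_less_imp_less) simp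
  have "\<lfloor>2^k * t\<rfloor> = int q" by (rule floor_unique) (use l u in auto)
  then show ?thesis unfolding rademacher_def eps_def q_def by (simp add: even_of_nat_iff)
qed



lemma avg_sum: "avg n (\<lambda>j. \<Sum>i\<in>A. f i j) = (\<Sum>i\<in>A. avg n (f i))"
  unfolding avg_def sum_divide_distrib by (rule sum.swap)

lemma avg_add: "avg n (\<lambda>j. f j + g j) = avg n f + avg n g"
  unfolding avg_def by (simp add: sum.distrib add_divide_distrib)

lemma avg_const: "avg n (\<lambda>j. c) = c"
  unfolding avg_def by simp

lemma avg_divide: "avg n (\<lambda>j. f j / c) = avg n f / c"
  unfolding avg_def by (simp add: sum_divide_distrib mult.commute)

lemma avg_mono: "(\<And>j. j < 2^n \<Longrightarrow> f j \<le> g j) \<Longrightarrow> avg n f \<le> avg n g"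
  unfolding avg_def by (intro divide_right_mono sum_mono) auto

lemma avg_nonneg: "(\<And>j. j < 2^n \<Longrightarrow> 0 \<le> f j) \<Longrightarrow> 0 \<le> avg n f"
  using avg_mono[of n "\<lambda>_. 0" f] by (simp add: avg_const)

lemma convex_neg_ln_sq: "convex_on {exp 1 ..} (\<lambda>y. - ((ln y)^2))"
proof (rule convex_on_realI[where f' = "\<lambda>y. - 2 * ln y / y"])
  show "connected {exp 1::real ..}" by simp
next
  fix x :: real assume "x \<in> {exp 1 ..}"
  then have "0 < x" by (meson atLeast_iff exp_gt_zero less_le_trans)
  then show "((\<lambda>y. - ((ln y)^2)) has_real_derivative - 2 * ln x / x) (at x)"
    by (auto intro!: derivative_eq_intros simp: field_simps power2_eq_square)
next
  fix x y :: real assume "x \<in> {exp 1 ..}" "y \<in> {exp 1 ..}" "x \<le> y"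
  then have "ln y / y \<le> ln x / x" by (intro ln_x_over_x_mono) auto
  then have "2 * (ln y / y) \<le> 2 * (ln x / x)" by simp
  then show "- 2 * ln x / x \<le> - 2 * ln y / y" by simp
qed

lemma jensen_ln_sq:
  assumes "\<And>j. j < 2^n \<Longrightarrow> exp 1 \<le> W j"
  shows "avg n (\<lambda>j. (ln (W j))^2) \<le> (ln (avg n W))^2"
proof -
  have "(\<lambda>y. - ((ln y)^2)) (\<Sum>j<2^n. (1/2^n) *\<^sub>R W j) \<le> (\<Sum>j<2^n. (1/2^n) * (\<lambda>y. - ((ln y)^2)) (W j))"
    by (rule convex_on_sum[OF _ _ convex_neg_ln_sq]) (use assms in \<open>auto simp: lessThan_empty_iff\<close>)
  moreover have "(\<Sum>j<2^n. (1/2^n) *\<^sub>R W j) = avg n W"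
    unfolding avg_def by (simp add: sum_divide_distrib)
  moreover have "(\<Sum>j<2^n. (1/2^n) * (\<lambda>y. - ((ln y)^2)) (W j)) = - avg n (\<lambda>j. (ln (W j))^2)"
    unfolding avg_def sum_divide_distrib sum_negf[symmetric] by simp
  ultimately show ?thesis by simp
qed

lemma exp2_ge3: "3 \<le> exp (2::real)"
  using exp_ge_add_one_self[of 2] by simp

lemma max_bound:
  fixes a :: "nat \<Rightarrow> nat \<Rightarrow> real"
  assumes N: "1 \<le> N" and s2: "0 \<le> s2" and A: "\<And>i. i < N \<Longrightarrow> (\<Sum>k<n. (a k i)^2) \<le> s2"
  shows "avg n (\<lambda>j. Max ((\<lambda>i. (\<Sum>k<n. eps n j (Suc k) * a k i)^2) ` {..<N}))
           \<le> 9 * (1 + ln (real N)) * s2"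
proof (cases "s2 = 0")
  case True
  have "a k i = 0" if "i < N" "k < n" for i k
  proof -
    have "(\<Sum>k<n. (a k i)^2) = 0" using A[OF that(1)] True by (simp add: antisym sum_nonneg)
    then show ?thesis using that(2) by (simp add: sum_nonneg_eq_0_iff)
  qed
  then have "(\<lambda>i. (\<Sum>k<n. eps n j (Suc k) * a k i)^2) ` {..<N} = {0}" for j
  proof -
    have "(\<lambda>i. (\<Sum>k<n. eps n j (Suc k) * a k i)^2) ` {..<N} = (\<lambda>i. 0) ` {..<N}"
      by (intro image_cong) (auto simp: \<open>\<And>i k. i < N \<Longrightarrow> k < n \<Longrightarrow> a k i = 0\<close>)
    also have "\<dots> = {0}" using N by (simp add: image_constant_conv lessThan_empty_iff)
    finally show ?thesis .
  qed
  then show ?thesis using True by (simp add: avg_const)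
next
  case False
  then have s2p: "0 < s2" using s2 by simp
  define L where "L = ln (real N)"
  have L0: "0 \<le> L" unfolding L_def using N by simp
  define s where "s = sqrt ((1 + L) / s2)"
  have sp: "0 < s" unfolding s_def using L0 s2p by simp
  have ssq: "s^2 = (1 + L) / s2" unfolding s_def using L0 s2p by simp
  define X where "X i j = (\<Sum>k<n. eps n j (Suc k) * a k i)" for i j
  define W where "W j = exp 1 + (\<Sum>i<N. exp (s * X i j) + exp (- (s * X i j)))" for j
  have Wge: "exp 1 \<le> W j" for j unfolding W_def by (intro add_increasing2 sum_nonneg) auto
  have Wpos: "0 < W j" for j using Wge[of j] exp_gt_zero[of 1] by linarith
  have pt: "Max ((\<lambda>i. (X i j)^2) ` {..<N}) \<le> (ln (W j))^2 / s^2" for j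
  proof -
    have "(X i j)^2 \<le> (ln (W j))^2 / s^2" if i: "i < N" for i
    proof -
    have "exp (s * \<bar>X i j\<bar>) \<le> exp (s * X i j) + exp (- (s * X i j))"
      by (cases "0 \<le> X i j") (auto simp: add_increasing add_increasing2)
    also have "\<dots> \<le> (\<Sum>i<N. exp (s * X i j) + exp (- (s * X i j)))"
      by (rule member_le_sum) (use i in \<open>auto intro: add_nonneg_nonneg\<close>)
    also have "\<dots> \<le> W j" unfolding W_def by simp
    finally have "s * \<bar>X i j\<bar> \<le> ln (W j)" using Wpos by (metis ln_exp ln_le_cancel_iff exp_gt_zero)
    then have "(s * \<bar>X i j\<bar>)^2 \<le> (ln (W j))^2" by (intro power_mono) (use sp in auto)
    then show "(X i j)^2 \<le> (ln (W j))^2 / s^2" using sp by (simp add: field_simps power_mult_distrib)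
    qed
    then show ?thesis using N by (subst Max_le_iff) (auto simp: lessThan_empty_iff)
  qed
  have cprod: "(\<Prod>k<n. cosh (s * a k i)) \<le> exp (1 + L)" if i: "i < N" for i
  proof -
    have "(\<Prod>k<n. cosh (s * a k i)) \<le> (\<Prod>k<n. exp ((s * a k i)^2))"
      by (intro prod_mono) (auto simp: cosh_le_exp_sq intro: order_trans[OF zero_le_one cosh_real_ge_1])
    also have "\<dots> = exp (s^2 * (\<Sum>k<n. (a k i)^2))"
      by (simp add: exp_sum[symmetric] sum_distrib_left power_mult_distrib)
    also have "\<dots> \<le> exp (s^2 * s2)" using A[OF i] sp by simp
    also have "\<dots> = exp (1 + L)" using ssq s2p by simp
    finally show ?thesis .
  qed
  have avgexp: "avg n (\<lambda>j. exp (c * X i j)) = (\<Prod>k<n. cosh (c * a k i))" for c i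
  proof -
    have "(\<lambda>j. exp (c * X i j)) = (\<lambda>j. exp (\<Sum>k<n. eps n j (Suc k) * (c * a k i)))"
      unfolding X_def by (simp add: sum_distrib_left ac_simps)
    then show ?thesis by (simp add: avg_exp)
  qed
  have "avg n W = exp 1 + (\<Sum>i<N. (\<Prod>k<n. cosh (s * a k i)) + (\<Prod>k<n. cosh (s * a k i)))"
  proof -
    have "avg n W = exp 1 + (\<Sum>i<N. avg n (\<lambda>j. exp (s * X i j)) + avg n (\<lambda>j. exp ((-s) * X i j)))"
      unfolding W_def by (simp add: avg_add avg_const avg_sum)
    moreover have "avg n (\<lambda>j. exp (- (s * X i j))) = (\<Prod>k<n. cosh (s * a k i))" for i
      using avgexp[of "-s" i] by simp
    ultimately show ?thesis by (simp add: avgexp)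
  qed
  also have "\<dots> \<le> exp 1 + (\<Sum>i<N. exp (1 + L) + exp (1 + L))"
    by (intro add_left_mono sum_mono add_mono cprod) auto
  also have "\<dots> = exp 1 + 2 * exp 1 * real N * real N"
    unfolding L_def using N by (simp add: exp_add)
  also have "\<dots> \<le> 3 * exp 1 * real N ^ 2"
  proof -
    have "1 \<le> real N" using N by simp
    then have "1 * 1 \<le> real N * real N" by (intro mult_mono) auto
    then have "exp 1 * 1 \<le> exp 1 * (real N * real N)" by (intro mult_left_mono) auto
    then show ?thesis by (simp add: power2_eq_square)
  qed
  finally have aW: "avg n W \<le> 3 * exp 1 * real N ^ 2" .
  have aWge: "exp 1 \<le> avg n W" using avg_mono[of n "\<lambda>_. exp 1" W] Wge by (simp add: avg_const)
  have lnaW: "ln (avg n W) \<le> 3 + 2 * L"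
  proof -
    have "ln (avg n W) \<le> ln (3 * exp 1 * real N ^ 2)"
      using aW aWge exp_gt_zero[of 1] by (intro ln_mono) linarith+
    also have "\<dots> = ln 3 + 1 + 2 * L" unfolding L_def using N by (simp add: ln_mult ln_realpow)
    also have "ln (3::real) \<le> ln (exp 2)" using exp2_ge3 by (intro ln_mono) auto
    then have "ln (3::real) \<le> 2" by simp
    then have "ln 3 + 1 + 2 * L \<le> 3 + 2 * L" by simp
    finally show ?thesis .
  qed
  have lnaW0: "1 \<le> ln (avg n W)" using aWge by (metis exp_gt_zero ln_exp ln_le_cancel_iff order_less_le_trans)
  have "avg n (\<lambda>j. Max ((\<lambda>i. (X i j)^2) ` {..<N})) \<le> avg n (\<lambda>j. (ln (W j))^2 / s^2)"
    by (rule avg_mono) (rule pt)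
  also have "\<dots> = avg n (\<lambda>j. (ln (W j))^2) / s^2" by (rule avg_divide)
  also have "\<dots> \<le> (ln (avg n W))^2 / s^2"
    by (intro divide_right_mono jensen_ln_sq Wge) simp
  also have "\<dots> \<le> (3 + 3 * L)^2 / s^2"
    by (intro divide_right_mono power_mono) (use lnaW lnaW0 L0 in auto)
  also have "\<dots> = 9 * (1 + L) * s2"
  proof -
    have "(3 + 3 * L)^2 / s^2 = 9 * (1 + L) * (1 + L) / ((1 + L) / s2)" unfolding ssq by (simp add: power2_eq_square algebra_simps)
    also have "\<dots> = 9 * (1 + L) * s2" using L0 s2p by (simp add: field_simps)
    finally show ?thesis .
  qed
  finally show ?thesis unfolding X_def L_def .
qed



lemma clin_fun_bl: assumes "bounded_clin_fun \<phi>" shows "bounded_linear \<phi>"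
proof -
  from assms obtain K where add: "\<And>x y. \<phi> (x + y) = \<phi> x + \<phi> y"
    and sc: "\<And>c x. \<phi> (cscale c x) = c * \<phi> x" and K: "\<And>x. cmod (\<phi> x) \<le> K * norm x"
    unfolding bounded_clin_fun_def by blast
  show ?thesis
  proof (rule bounded_linear_intro[where K=K])
    show "\<phi> (r *\<^sub>R x) = r *\<^sub>R \<phi> x" for r x
      using sc[of "complex_of_real r" x] by (simp add: cscale_of_real scaleR_conv_of_real)
    show "norm (\<phi> x) \<le> norm x * K" for x using K[of x] by (simp add: mult.commute)
  qed (rule add)
qed

lemma clin_op_bl: assumes "bounded_clin_op T" shows "bounded_linear T"
proof -
  from assms obtain K where add: "\<And>x y. T (x + y) = T x + T y"
    and sc: "\<And>c x. T (cscale c x) = cscale c (T x)" and K: "\<And>x. norm (T x) \<le> K * norm x"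
    unfolding bounded_clin_op_def by blast
  show ?thesis
  proof (rule bounded_linear_intro[where K=K])
    show "T (r *\<^sub>R x) = r *\<^sub>R T x" for r x
      using sc[of "complex_of_real r" x] by (simp add: cscale_of_real)
    show "norm (T x) \<le> norm x * K" for x using K[of x] by (simp add: mult.commute)
  qed (rule add)
qed

lemma dual_ball_le: assumes "\<psi> \<in> dual_ball" shows "cmod (\<psi> v) \<le> norm v"
proof -
  have bl: "bounded_linear \<psi>" and o: "onorm \<psi> \<le> 1" using assms clin_fun_bl unfolding dual_ball_def by auto
  have "cmod (\<psi> v) \<le> onorm \<psi> * norm v" using onorm[OF bl] by simp
  also have "\<dots> \<le> 1 * norm v" by (intro mult_right_mono o) simp
  finally show ?thesis by simp
qed

lemma weak_l2_ge: assumes "\<psi> \<in> dual_ball"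
  shows "sqrt (\<Sum>k<n. (cmod (\<psi> (x k)))^2) \<le> weak_l2 n x"
  unfolding weak_l2_def
proof (rule cSUP_upper[OF assms])
  show "bdd_above ((\<lambda>\<phi>. sqrt (\<Sum>k<n. (cmod (\<phi> (x k)))\<^sup>2)) ` dual_ball)"
  proof (rule bdd_aboveI2)
    fix \<phi> assume "\<phi> \<in> (dual_ball :: ('a \<Rightarrow> complex) set)"
    then show "sqrt (\<Sum>k<n. (cmod (\<phi> (x k)))\<^sup>2) \<le> sqrt (\<Sum>k<n. (norm (x k))\<^sup>2)"
      by (intro real_sqrt_le_mono sum_mono power_mono dual_ball_le) auto
  qed
qed

lemma zero_dual_ball: "(\<lambda>_. 0) \<in> dual_ball"
  unfolding dual_ball_def bounded_clin_fun_def by (auto simp: onorm_zero intro: exI[of _ 0])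

lemma weak_l2_nonneg: "0 \<le> weak_l2 n x"
  using weak_l2_ge[OF zero_dual_ball, of n x] by simp

lemma linf_nonneg: "0 \<le> linf_norm N v"
  unfolding linf_norm_def by (rule Max_ge_iff[THEN iffD2]) auto

lemma linf_ge: "i < N \<Longrightarrow> cmod (v i) \<le> linf_norm N v"
  unfolding linf_norm_def by (rule Max_ge) auto

lemma linf_le: "0 \<le> B \<Longrightarrow> (\<And>i. i < N \<Longrightarrow> cmod (v i) \<le> B) \<Longrightarrow> linf_norm N v \<le> B"
  unfolding linf_norm_def by (subst Max_le_iff) auto

lemma exp4_ge18: "18 \<le> exp (4::real)"
proof -
  have "27/10 \<le> exp (1::real)" using e_approx_32 by (simp add: abs_if split: if_splits)
  then have "(27/10)^4 \<le> exp (1::real) ^ 4" by (intro power_mono) auto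
  also have "exp (1::real) ^ 4 = exp 4" by (simp add: exp_of_nat_mult[symmetric])
  moreover have "(18::real) \<le> (27/10)^4" by (simp add: power_divide)
  ultimately show ?thesis by linarith
qed

lemma sqrt18_le: "sqrt 18 \<le> exp (2::real)"
proof -
  have "sqrt 18 \<le> sqrt (exp (4::real))" using exp4_ge18 by simp
  also have "exp (4::real) = (exp 2)^2" by (simp add: exp_double[symmetric] power2_eq_square exp_add[symmetric])
  finally show ?thesis by simp
qed



lemma Re_sq_le: "(Re z)^2 \<le> (cmod z)^2"
proof -
  have "\<bar>Re z\<bar>^2 \<le> (cmod z)^2" by (intro power_mono abs_Re_le_cmod) simp
  then show ?thesis by simp
qed

lemma Im_sq_le: "(Im z)^2 \<le> (cmod z)^2"
proof -
  have "\<bar>Im z\<bar>^2 \<le> (cmod z)^2" by (intro power_mono abs_Im_le_cmod) simp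
  then show ?thesis by simp
qed

theorem proposition4p3:
  fixes N :: nat and lam :: real
    and I :: "'x::cbanach \<Rightarrow> nat \<Rightarrow> complex" and T :: "'x \<Rightarrow> 'f::cbanach"
  assumes "1 \<le> lam"
    and "lambda_embedding N lam I"
    and "bounded_clin_op T"
  shows "pi2 T \<le> ereal (exp 2 * lam * sqrt (1 + ln (real N))) * cotype2_const TYPE('f) * ereal (onorm T)"
proof -
  have Iadd: "\<And>x y. I (x + y) = (\<lambda>i. I x i + I y i)"
   and Isc: "\<And>c x. I (cscale c x) = (\<lambda>i. c * I x i)"
   and Isupp: "\<And>x i. N \<le> i \<Longrightarrow> I x i = 0"
   and Iinj: "inj I"
   and bdd1: "bdd_above (range (\<lambda>x. linf_norm N (I x) / norm x))"
   and bdd2: "bdd_above (range (\<lambda>x. norm x / linf_norm N (I x)))"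
   and prodle: "(SUP x. linf_norm N (I x) / norm x) * (SUP x. norm x / linf_norm N (I x)) \<le> lam"
    using assms(2) unfolding lambda_embedding_def by auto
  define nI where "nI = (SUP x. linf_norm N (I x) / norm x)"
  define mI where "mI = (SUP x. norm x / linf_norm N (I x))"
  have lamI: "nI * mI \<le> lam" using prodle unfolding nI_def mI_def .
  have I0: "I 0 = (\<lambda>i. 0)"
  proof
    fix i
    have "I 0 i = I 0 i + I 0 i" using fun_cong[OF Iadd[of 0 0], of i] by simp
    then show "I 0 i = 0" by simp
  qed
  have Ireal: "I (r *\<^sub>R x) = (\<lambda>i. complex_of_real r * I x i)" for r x
    using Isc[of "complex_of_real r" x] by (simp add: cscale_of_real)
  have Isum: "I (\<Sum>k<n. f k) = (\<lambda>i. \<Sum>k<n. I (f k) i)" for n and f :: "nat \<Rightarrow> 'x"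
    by (induction n) (simp_all add: I0 Iadd)
  have linf0: "linf_norm N (\<lambda>i. 0) = 0"
    using linf_le[of 0 N "\<lambda>i. 0"] linf_nonneg[of N "\<lambda>i. 0"] by simp
  have nI0: "0 \<le> nI" unfolding nI_def using cSUP_upper[OF UNIV_I bdd1, of 0] by simp
  have mI0: "0 \<le> mI" unfolding mI_def using cSUP_upper[OF UNIV_I bdd2, of 0] by simp
  have Ib: "linf_norm N (I x) \<le> nI * norm x" for x
  proof (cases "x = 0")
    case True then show ?thesis by (simp add: I0 linf0)
  next
    case False
    have "linf_norm N (I x) / norm x \<le> nI" unfolding nI_def by (rule cSUP_upper[OF UNIV_I bdd1])
    then show ?thesis using False by (simp add: pos_divide_le_eq mult.commute)
  qed
  have Iinv: "norm x \<le> mI * linf_norm N (I x)" for x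
  proof (cases "x = 0")
    case True then show ?thesis using mI0 linf_nonneg by simp
  next
    case False
    have "I x \<noteq> I 0" using Iinj False by (metis injD)
    then obtain i where i: "I x i \<noteq> 0" using I0 by auto
    then have "i < N" using Isupp by (meson not_le)
    then have "0 < linf_norm N (I x)" using linf_ge[of i N "I x"] i by (meson less_le_trans zero_less_norm_iff)
    moreover have "norm x / linf_norm N (I x) \<le> mI" unfolding mI_def by (rule cSUP_upper[OF UNIV_I bdd2])
    ultimately show ?thesis by (simp add: pos_divide_le_eq mult.commute)
  qed
  have coord: "(\<Sum>k<n. (cmod (I (x k) i))^2) \<le> nI^2 * (weak_l2 n x)^2" if i: "i < N" for n x i
  proof (cases "nI = 0")
    case True
    have "cmod (I v i) = 0" for v
    proof -
      have "cmod (I v i) \<le> nI * norm v" using linf_ge[OF i, of "I v"] Ib[of v] by linarith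
      then show ?thesis using True by simp
    qed
    then show ?thesis by simp
  next
    case False
    then have nIp: "0 < nI" using nI0 by simp
    define \<phi> where "\<phi> v = I v i / complex_of_real nI" for v
    have phib: "cmod (\<phi> v) \<le> 1 * norm v" for v
    proof -
      have "cmod (\<phi> v) = cmod (I v i) / nI" unfolding \<phi>_def using nIp by (simp add: norm_divide)
      also have "\<dots> \<le> linf_norm N (I v) / nI" by (intro divide_right_mono linf_ge i) (use nIp in auto)
      also have "\<dots> \<le> norm v" using Ib[of v] nIp by (simp add: divide_le_eq mult.commute)
      finally show ?thesis by simp
    qed
    have "\<phi> \<in> dual_ball"
      unfolding dual_ball_def bounded_clin_fun_def
    proof (intro CollectI conjI allI exI)
      show "\<phi> (x + y) = \<phi> x + \<phi> y" for x y unfolding \<phi>_def by (simp add: Iadd add_divide_distrib)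
      show "\<phi> (cscale c x) = c * \<phi> x" for c x unfolding \<phi>_def by (simp add: Isc)
      show "cmod (\<phi> x) \<le> 1 * norm x" for x by (rule phib)
      show "onorm \<phi> \<le> 1" by (rule onorm_bound) (use phib in auto)
    qed
    then have "sqrt (\<Sum>k<n. (cmod (\<phi> (x k)))^2) \<le> weak_l2 n x" by (rule weak_l2_ge)
    then have "(sqrt (\<Sum>k<n. (cmod (\<phi> (x k)))^2))^2 \<le> (weak_l2 n x)^2"
      by (intro power_mono) (auto intro!: sum_nonneg)
    moreover have "0 \<le> (\<Sum>k<n. (cmod (\<phi> (x k)))^2)" by (rule sum_nonneg) simp
    ultimately have "(\<Sum>k<n. (cmod (\<phi> (x k)))^2) \<le> (weak_l2 n x)^2" by simp
    moreover have "(\<Sum>k<n. (cmod (\<phi> (x k)))^2) = (\<Sum>k<n. (cmod (I (x k) i))^2) / nI^2"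
      unfolding \<phi>_def using nIp by (simp add: norm_divide power_divide sum_divide_distrib)
    ultimately show ?thesis using nIp by (simp add: divide_le_eq mult.commute)
  qed
  have Tbl: "bounded_linear T" by (rule clin_op_bl[OF assms(3)])
  interpret Tl: bounded_linear T by (rule Tbl)
  define B where "B = onorm T"
  have B0: "0 \<le> B" unfolding B_def by (rule onorm_pos_le[OF Tbl])
  have TB: "norm (T v) \<le> B * norm v" for v unfolding B_def by (rule onorm[OF Tbl])
  define L where "L = ln (real N)"
  have L0: "0 \<le> L" unfolding L_def by (cases "N = 0") auto
  define A where "A = exp 2 * lam * sqrt (1 + L)"
  have A0: "0 < A" unfolding A_def using assms(1) L0 by simp
  define Cs where "Cs = {C. 0 \<le> C \<and> (\<forall>n (x::nat \<Rightarrow> 'f).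
       ereal (sqrt (\<Sum>k<n. (norm (x k))\<^sup>2)) \<le>
       C * ereal (sqrt (integral {0..1} (\<lambda>t. (norm (\<Sum>k<n. rademacher (Suc k) t *\<^sub>R x k))\<^sup>2))))}"
  define Ps where "Ps = {C. 0 \<le> C \<and> (\<forall>n (x::nat \<Rightarrow> 'x).
       ereal (sqrt (\<Sum>k<n. (norm (T (x k)))\<^sup>2)) \<le> C * ereal (weak_l2 n x))}"
  have cot: "cotype2_const TYPE('f) = Inf Cs" unfolding cotype2_const_def Cs_def ..
  have pi: "pi2 T = Inf Ps" unfolding pi2_def Ps_def ..
  have fin: "ereal (A * c' * B) \<in> Ps" if c0: "0 \<le> c'" and cC: "ereal c' \<in> Cs" for c'
  proof -
    have "ereal (sqrt (\<Sum>k<n. (norm (T (x k)))\<^sup>2)) \<le> ereal (A * c' * B) * ereal (weak_l2 n x)"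
      for n and x :: "nat \<Rightarrow> 'x"
    proof -
      define w where "w = weak_l2 n x"
      have w0: "0 \<le> w" unfolding w_def by (rule weak_l2_nonneg)
      define v where "v j = (\<Sum>k<n. eps n j (Suc k) *\<^sub>R x k)" for j
      have hcot: "ereal (sqrt (\<Sum>k<n. (norm (T (x k)))\<^sup>2)) \<le>
        ereal c' * ereal (sqrt (integral {0..1} (\<lambda>t. (norm (\<Sum>k<n. rademacher (Suc k) t *\<^sub>R T (x k)))\<^sup>2)))"
        using cC unfolding Cs_def by auto
      have Tv: "T (v j) = (\<Sum>k<n. eps n j (Suc k) *\<^sub>R T (x k))" for j
        unfolding v_def by (simp add: Tl.sum Tl.scale)
      have "((\<lambda>t. (norm (\<Sum>k<n. rademacher (Suc k) t *\<^sub>R T (x k)))\<^sup>2) has_integral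
              avg n (\<lambda>j. (norm (T (v j)))^2)) {0..1}"
        unfolding Tv
      proof (rule dyadic_integral)
        fix j t assume "j < 2^n" "real j / 2^n \<le> t" "t < (real j + 1) / 2^n"
        then have "rademacher (Suc k) t = eps n j (Suc k)" if "k < n" for k
          using rademacher_dyadic that by auto
        then show "(norm (\<Sum>k<n. rademacher (Suc k) t *\<^sub>R T (x k)))\<^sup>2 =
                   (norm (\<Sum>k<n. eps n j (Suc k) *\<^sub>R T (x k)))\<^sup>2" by simp
      qed
      then have intg: "integral {0..1} (\<lambda>t. (norm (\<Sum>k<n. rademacher (Suc k) t *\<^sub>R T (x k)))\<^sup>2)
          = avg n (\<lambda>j. (norm (T (v j)))^2)" by (rule integral_unique)
      have Iv: "I (v j) = (\<lambda>i. \<Sum>k<n. complex_of_real (eps n j (Suc k)) * I (x k) i)" for j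
        unfolding v_def Isum Ireal ..
      have avL: "avg n (\<lambda>j. (linf_norm N (I (v j)))^2) \<le> 18 * (1 + L) * (nI^2 * w^2)"
      proof (cases "N = 0")
        case True
        have "linf_norm N (I (v j)) = 0" for j
          using linf_le[of 0 N "I (v j)"] linf_nonneg[of N "I (v j)"] True by simp
        then show ?thesis using L0 by (simp add: avg_const)
      next
        case False
        then have N1: "1 \<le> N" by simp
        define M1 where "M1 j = Max ((\<lambda>i. (\<Sum>k<n. eps n j (Suc k) * Re (I (x k) i))^2) ` {..<N})" for j
        define M2 where "M2 j = Max ((\<lambda>i. (\<Sum>k<n. eps n j (Suc k) * Im (I (x k) i))^2) ` {..<N})" for j
        have pt: "(linf_norm N (I (v j)))^2 \<le> M1 j + M2 j" for j
        proof -
          have m1: "(\<Sum>k<n. eps n j (Suc k) * Re (I (x k) i))^2 \<le> M1 j" if "i < N" for i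
            unfolding M1_def by (rule Max_ge) (use that in auto)
          have m2: "(\<Sum>k<n. eps n j (Suc k) * Im (I (x k) i))^2 \<le> M2 j" if "i < N" for i
            unfolding M2_def by (rule Max_ge) (use that in auto)
          have M0: "0 \<le> M1 j + M2 j" using m1[of 0] m2[of 0] N1
            by (smt (verit, best) less_one order_less_le_trans zero_le_power2)
          have "linf_norm N (I (v j)) \<le> sqrt (M1 j + M2 j)"
          proof (rule linf_le)
            fix i assume i: "i < N"
            have "cmod (I (v j) i) = sqrt ((Re (I (v j) i))^2 + (Im (I (v j) i))^2)" by (simp add: cmod_def)
            also have "Re (I (v j) i) = (\<Sum>k<n. eps n j (Suc k) * Re (I (x k) i))" by (simp add: Iv Re_sum)
            also have "Im (I (v j) i) = (\<Sum>k<n. eps n j (Suc k) * Im (I (x k) i))" by (simp add: Iv Im_sum)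
            finally show "cmod (I (v j) i) \<le> sqrt (M1 j + M2 j)" using m1[OF i] m2[OF i] by simp
          qed (simp add: M0)
          then have "(linf_norm N (I (v j)))^2 \<le> (sqrt (M1 j + M2 j))^2"
            by (intro power_mono linf_nonneg)
          then show ?thesis using M0 by simp
        qed
        have s1: "(\<Sum>k<n. (Re (I (x k) i))^2) \<le> nI^2 * w^2" if "i < N" for i
        proof -
          have "(\<Sum>k<n. (Re (I (x k) i))^2) \<le> (\<Sum>k<n. (cmod (I (x k) i))^2)"
            by (intro sum_mono) (rule Re_sq_le)
          then show ?thesis using coord[OF that, where n=n and x=x] unfolding w_def by linarith
        qed
        have s2: "(\<Sum>k<n. (Im (I (x k) i))^2) \<le> nI^2 * w^2" if "i < N" for i
        proof -
          have "(\<Sum>k<n. (Im (I (x k) i))^2) \<le> (\<Sum>k<n. (cmod (I (x k) i))^2)"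
            by (intro sum_mono) (rule Im_sq_le)
          then show ?thesis using coord[OF that, where n=n and x=x] unfolding w_def by linarith
        qed
        have "avg n (\<lambda>j. (linf_norm N (I (v j)))^2) \<le> avg n (\<lambda>j. M1 j + M2 j)"
          by (rule avg_mono) (rule pt)
        also have "\<dots> = avg n M1 + avg n M2" by (rule avg_add)
        also have "avg n M1 \<le> 9 * (1 + L) * (nI^2 * w^2)"
          unfolding M1_def L_def by (rule max_bound[OF N1]) (use s1 in auto)
        also have "avg n M2 \<le> 9 * (1 + L) * (nI^2 * w^2)"
          unfolding M2_def L_def by (rule max_bound[OF N1]) (use s2 in auto)
        finally show ?thesis by (simp add: algebra_simps)
      qed
      have avT: "avg n (\<lambda>j. (norm (T (v j)))^2) \<le> (B * mI)^2 * (18 * (1 + L) * (nI^2 * w^2))"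
      proof -
        have "avg n (\<lambda>j. (norm (T (v j)))^2) \<le> avg n (\<lambda>j. (B * mI)^2 * (linf_norm N (I (v j)))^2)"
        proof (rule avg_mono)
          fix j
          have "norm (T (v j)) \<le> B * mI * linf_norm N (I (v j))"
            using TB[of "v j"] mult_left_mono[OF Iinv[of "v j"] B0] by (simp add: mult.assoc)
          then have "(norm (T (v j)))^2 \<le> (B * mI * linf_norm N (I (v j)))^2" by (intro power_mono) auto
          then show "(norm (T (v j)))^2 \<le> (B * mI)^2 * (linf_norm N (I (v j)))^2" by (simp add: power_mult_distrib)
        qed
        also have "\<dots> = (B * mI)^2 * avg n (\<lambda>j. (linf_norm N (I (v j)))^2)"
          unfolding avg_def by (simp add: sum_distrib_left)
        also have "\<dots> \<le> (B * mI)^2 * (18 * (1 + L) * (nI^2 * w^2))"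
          by (intro mult_left_mono avL) simp
        finally show ?thesis .
      qed
      have "sqrt (\<Sum>k<n. (norm (T (x k)))\<^sup>2) \<le> c' * sqrt (avg n (\<lambda>j. (norm (T (v j)))^2))"
        using hcot unfolding intg by simp
      also have "\<dots> \<le> c' * sqrt ((B * mI)^2 * (18 * (1 + L) * (nI^2 * w^2)))"
        by (intro mult_left_mono c0 real_sqrt_le_mono avT)
      also have "sqrt ((B * mI)^2 * (18 * (1 + L) * (nI^2 * w^2))) = (B * w) * (mI * nI * sqrt 18) * sqrt (1 + L)"
      proof -
        have "(B * mI)^2 * (18 * (1 + L) * (nI^2 * w^2)) = (B * mI * nI * w)^2 * (18 * (1 + L))"
          by (simp add: power_mult_distrib)
        then have "sqrt ((B * mI)^2 * (18 * (1 + L) * (nI^2 * w^2))) = sqrt ((B * mI * nI * w)^2) * sqrt (18 * (1 + L))"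
          by (simp only: real_sqrt_mult)
        also have "sqrt ((B * mI * nI * w)^2) = B * mI * nI * w" using B0 mI0 nI0 w0 by simp
        also have "sqrt (18 * (1 + L)) = sqrt 18 * sqrt (1 + L)" by (rule real_sqrt_mult)
        finally have "sqrt ((B * mI)^2 * (18 * (1 + L) * (nI^2 * w^2))) = (B * mI * nI * w) * (sqrt 18 * sqrt (1 + L))" .
        then show ?thesis by (simp add: mult_ac)
      qed
      also have "c' * ((B * w) * (mI * nI * sqrt 18) * sqrt (1 + L)) \<le> c' * ((B * w) * (lam * exp 2) * sqrt (1 + L))"
      proof -
        have "mI * nI * sqrt 18 \<le> lam * exp 2"
          using lamI sqrt18_le by (intro mult_mono) (use assms(1) in \<open>auto simp: mult.commute mI0 nI0\<close>)
        then show ?thesis using c0 B0 w0 L0 by (intro mult_left_mono mult_right_mono) auto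
      qed
      also have "\<dots> = A * c' * B * w" unfolding A_def by (simp add: mult_ac)
      finally show ?thesis unfolding w_def by simp
    qed
    moreover have "0 \<le> A * c' * B" using A0 c0 B0 by simp
    ultimately show ?thesis unfolding Ps_def by simp
  qed
  show ?thesis
  proof (cases "B = 0")
    case True
    then have T0: "T v = 0" for v using TB[of v] by simp
    have "0 \<in> Ps" unfolding Ps_def by (simp add: T0)
    then have "pi2 T \<le> 0" unfolding pi by (rule Inf_lower)
    then show ?thesis using True unfolding B_def by (simp add: zero_ereal_def[symmetric])
  next
    case False
    then have Bp: "0 < B" using B0 by simp
    have "pi2 T \<le> ereal (A * B) * c" if cC: "c \<in> Cs" for c
    proof (cases c)
      case (real c')
      have "0 \<le> c'" using cC real unfolding Cs_def by simp
      then have "ereal (A * c' * B) \<in> Ps" using fin cC real by simp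
      then have "pi2 T \<le> ereal (A * c' * B)" unfolding pi by (rule Inf_lower)
      then show ?thesis using real by (simp add: mult_ac)
    next
      case PInf then show ?thesis using A0 Bp by simp
    next
      case MInf then show ?thesis using cC unfolding Cs_def by simp
    qed
    then have "pi2 T \<le> Inf {ereal (A * B) * c | c. c \<in> Cs}" by (auto intro!: Inf_greatest)
    also have "\<dots> = ereal (A * B) * Inf {c. c \<in> Cs}" by (rule ereal_Inf_cmult) (use A0 Bp in simp)
    also have "\<dots> = ereal (exp 2 * lam * sqrt (1 + ln (real N))) * cotype2_const TYPE('f) * ereal (onorm T)"
      unfolding cot A_def L_def B_def by (simp add: mult_ac)
    finally show ?thesis .
  qed
qed

end
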